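(* Let $\Lambda\subseteq\mathbb Z^D$ be a lattice that induces a lattice tiling of the shape $\mathcal S$, and let $\delta=(d_1,\dots,d_D)$ be a nonzero ternary vector. Then $(\Lambda,\mathcal S,\delta)$ defines a folding if and only if both of the following hold: <ul> <li>$|\mathcal S|\delta-c(|\mathcal S|\delta)=(0,\dots,0)$;</li> <li>for every integer $i$ with $0<i<|\mathcal S|$, $i\delta-c(i\delta)\neq(0,\dots,0)$.</li> </ul> Here $i\delta=(id_1,\dots,id_D)$.
   Context: Let $D\ge 1$. A shape is a finite nonempty set $\mathcal S\subset\mathbb Z^D$ containing the origin; the origin is its distinguished center point. A lattice is a set $\Lambda=\{\sum_{j=1}^D u_jv_j : u_1,\dots,u_D\in\mathbb Z\}$ for linearly independent $v_1,\dots,v_D\in\mathbb Z^D$. The $D\times D$ matrix $G$ whose rows are $v_1,\dots,v_D$ is a generator matrix of $\Lambda$. $\Lambda$ induces a lattice tiling of $\mathcal S$ if the translates $\mathcal S+\lambda$, $\lambda\in\Lambda$, are pairwise disjoint and cover $\mathbb Z^D$. The translate $\mathcal S+\lambda$ is called the copy of $\mathcal S$ with center $\lambda$. For $x\in\mathbb Z^D$, $c(x)$ denotes the unique $\lambda\in\Lambda$ with $x\in\mathcal S+\lambda$. A ternary vector (direction) is a nonzero $\delta\in\{-1,0,+1\}^D$. The folded-row of $(\Lambda,\mathcal S,\delta)$ is the sequence $p_0,p_1,p_2,\dots$ defined by $p_0=0$ and $p_{k+1}=(p_k+\delta)-c(p_k+\delta)$. Equivalently, $p_{k+1}=p_k+\delta$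 if $p_k+\delta\in\mathcal S$; otherwise $p_{k+1}$ is $p_k+\delta$ minus the center of the copy of $\mathcal S$ containing $p_k+\delta$. The triple $(\Lambda,\mathcal S,\delta)$ defines a folding if every element of $\mathcal S$ occurs in its folded-row. *)

theory Defs
  imports "HOL-Analysis.Analysis"
begin

text \<open>Points of Z^D are represented as int ^ 'n, the dimension D being CARD('n) (>= 1).\<close>

definition int_to_real_vec :: "int ^ 'n \<Rightarrow> real ^ 'n" where
  "int_to_real_vec x = (\<chi> i. real_of_int (x $ i))"

definition is_lattice :: "(int ^ 'n) set \<Rightarrow> bool" where
  "is_lattice L \<longleftrightarrow> (\<exists>v :: 'n \<Rightarrow> int ^ 'n.
      (\<forall>c :: 'n \<Rightarrow> real. (\<Sum>j\<in>UNIV. c j *\<^sub>R int_to_real_vec (v j)) = 0 \<longrightarrow> (\<forall>j. c j = 0)) \<and>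
      L = {x. \<exists>u :: 'n \<Rightarrow> int. x = (\<Sum>j\<in>UNIV. u j *s v j)})"

definition is_shape :: "(int ^ 'n) set \<Rightarrow> bool" where
  "is_shape S \<longleftrightarrow> finite S \<and> S \<noteq> {} \<and> 0 \<in> S"

definition lattice_tiling :: "(int ^ 'n) set \<Rightarrow> (int ^ 'n) set \<Rightarrow> bool" where
  "lattice_tiling L S \<longleftrightarrow>
     (\<forall>a\<in>L. \<forall>b\<in>L. a \<noteq> b \<longrightarrow> ((\<lambda>s. s + a) ` S) \<inter> ((\<lambda>s. s + b) ` S) = {}) \<and>
     (\<Union>a\<in>L. (\<lambda>s. s + a) ` S) = UNIV"

definition center :: "(int ^ 'n) set \<Rightarrow> (int ^ 'n) set \<Rightarrow> int ^ 'n \<Rightarrow> int ^ 'n" where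
  "center L S x = (THE a. a \<in> L \<and> x \<in> (\<lambda>s. s + a) ` S)"

definition ternary :: "int ^ 'n \<Rightarrow> bool" where
  "ternary d \<longleftrightarrow> d \<noteq> 0 \<and> (\<forall>k. d $ k \<in> {-1, 0, 1})"

fun folded_row :: "(int ^ 'n) set \<Rightarrow> (int ^ 'n) set \<Rightarrow> int ^ 'n \<Rightarrow> nat \<Rightarrow> int ^ 'n" where
  "folded_row L S d 0 = 0"
| "folded_row L S d (Suc k) =
     (folded_row L S d k + d) - center L S (folded_row L S d k + d)"

definition defines_folding :: "(int ^ 'n) set \<Rightarrow> (int ^ 'n) set \<Rightarrow> int ^ 'n \<Rightarrow> bool" where
  "defines_folding L S d \<longleftrightarrow> S \<subseteq> range (folded_row L S d)"

end

theory Submission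
  imports Defs
begin

lemma lat_diff:
  assumes "is_lattice L" "x \<in> L" "y \<in> L" shows "x - y \<in> L"
proof -
  obtain v :: "'a \<Rightarrow> int ^ 'a" where L: "L = {x. \<exists>u :: 'a \<Rightarrow> int. x = (\<Sum>j\<in>UNIV. u j *s v j)}"
    using assms(1) unfolding is_lattice_def by blast
  obtain u w where u: "x = (\<Sum>j\<in>UNIV. u j *s v j)" and w: "y = (\<Sum>j\<in>UNIV. w j *s v j)"
    using assms(2,3) L by blast
  have "x - y = (\<Sum>j\<in>UNIV. (u j - w j) *s v j)"
    unfolding u w by (simp add: vec_eq_iff sum_subtractf algebra_simps)
  thus ?thesis unfolding L by (intro CollectI exI)
qed

lemma center_char:
  assumes T: "lattice_tiling L S" and a: "a \<in> L" and s: "x - a \<in> S"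
  shows "center L S x = a"
  unfolding center_def
proof (rule the_equality)
  show "a \<in> L \<and> x \<in> (\<lambda>s. s + a) ` S" using a s by (auto intro!: image_eqI[where x="x - a"])
next
  fix b assume b: "b \<in> L \<and> x \<in> (\<lambda>s. s + b) ` S"
  show "b = a"
  proof (rule ccontr)
    assume "b \<noteq> a"
    hence "((\<lambda>s. s + b) ` S) \<inter> ((\<lambda>s. s + a) ` S) = {}" using T a b unfolding lattice_tiling_def by blast
    moreover have "x \<in> (\<lambda>s. s + a) ` S" using s by (auto intro!: image_eqI[where x="x - a"])
    ultimately show False using b by blast
  qed
qed

lemma center_ex:
  assumes T: "lattice_tiling L S"
  shows "center L S x \<in> L \<and> x - center L S x \<in> S"
proof -
  have "(\<Union>a\<in>L. (\<lambda>s. s + a) ` S) = UNIV" using T unfolding lattice_tiling_def by (rule conjunct2)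
  hence "x \<in> (\<Union>a\<in>L. (\<lambda>s. s + a) ` S)" by simp
  then obtain a where a: "a \<in> L" and "x \<in> (\<lambda>s. s + a) ` S" by (rule UN_E)
  then obtain s where s: "s \<in> S" and xs: "x = s + a" by blast
  have "x - a \<in> S" using s xs by simp
  hence "center L S x = a" by (rule center_char[OF T a])
  thus ?thesis using a s xs by simp
qed

locale fold_ctx =
  fixes L S :: "(int ^ 'n) set" and d :: "int ^ 'n"
  assumes lat: "is_lattice L" and shp: "is_shape S" and T: "lattice_tiling L S"
begin

definition r where "r x = x - center L S x"

lemma r_in: "r x \<in> S" and r_diff: "x - r x \<in> L"
  using center_ex[OF T, of x] unfolding r_def by auto

lemma r_eq: "r x = r y \<longleftrightarrow> x - y \<in> L"
proof
  assume "r x = r y"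
  hence "x - y = (x - r x) - (y - r y)" by simp
  thus "x - y \<in> L" using lat_diff[OF lat r_diff[of x] r_diff[of y]] by simp
next
  assume h: "x - y \<in> L"
  have "x - r y = (x - y) - (r y - y)" by simp
  moreover have "r y - y \<in> L"
  proof -
    have "0 \<in> L" using lat_diff[OF lat r_diff r_diff, of y y] by simp
    thus ?thesis using lat_diff[OF lat \<open>0 \<in> L\<close> r_diff[of y]] by simp
  qed
  moreover note lat_diff[OF lat h \<open>r y - y \<in> L\<close>]
  ultimately have "x - r y \<in> L" by simp
  hence "center L S x = x - r y" using center_char[OF T, of "x - r y" x] r_in by simp
  thus "r x = r y" unfolding r_def by simp
qed

lemma r_zero: "r x = 0 \<longleftrightarrow> x \<in> L"
proof -
  have "0 \<in> S" using shp unfolding is_shape_def by simp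
  have "r x = 0 \<longleftrightarrow> r x = r 0"
  proof -
    have "r 0 = 0" using r_eq[of 0 0] center_char[OF T, of 0 0] \<open>0 \<in> S\<close>
        lat_diff[OF lat r_diff r_diff, of 0 0] unfolding r_def by simp
    thus ?thesis by simp
  qed
  thus ?thesis using r_eq[of x 0] by simp
qed

lemma fr: "folded_row L S d k = r (int k *s d)"
proof (induction k)
  case 0 show ?case using r_zero[of 0] lat_diff[OF lat r_diff r_diff, of 0 0] by simp
next
  case (Suc k)
  have "folded_row L S d (Suc k) = r (r (int k *s d) + d)" using Suc by (simp add: r_def)
  also have "\<dots> = r (int (Suc k) *s d)"
  proof (subst r_eq)
    have "r (int k *s d) + d - int (Suc k) *s d = r (int k *s d) - int k *s d"
      by (simp add: vec_eq_iff algebra_simps)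
    moreover have "0 \<in> L" using lat_diff[OF lat r_diff r_diff, of 0 0] by simp
    ultimately show "r (int k *s d) + d - int (Suc k) *s d \<in> L"
      using lat_diff[OF lat \<open>0 \<in> L\<close> r_diff[of "int k *s d"]] by simp
  qed
  finally show ?case .
qed

lemma diff_mult: "r (int i *s d) = r (int j *s d) \<longleftrightarrow> (int i - int j) *s d \<in> L"
proof -
  have "int i *s d - int j *s d = (int i - int j) *s d" by (simp add: vec_eq_iff algebra_simps)
  thus ?thesis using r_eq by simp
qed

lemma neg_L: "x \<in> L \<Longrightarrow> - x \<in> L"
  using lat_diff[OF lat _ _, of 0 x] lat_diff[OF lat r_diff r_diff, of 0 0] by simp

lemma neg_mult: "(- a) *s d \<in> L \<Longrightarrow> a *s d \<in> L"
proof -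
  assume "(- a) *s d \<in> L"
  hence "- ((- a) *s d) \<in> L" by (rule neg_L)
  moreover have "- ((- a) *s d) = a *s d" by (simp add: vec_eq_iff)
  ultimately show ?thesis by simp
qed

end

theorem lemma3:
  fixes L S :: "(int ^ 'n) set" and d :: "int ^ 'n"
  assumes "is_lattice L" and "is_shape S" and "lattice_tiling L S" and "ternary d"
  shows "defines_folding L S d \<longleftrightarrow>
    ((int (card S) *s d) - center L S (int (card S) *s d) = 0 \<and>
     (\<forall>i::int. 0 < i \<and> i < int (card S) \<longrightarrow> (i *s d) - center L S (i *s d) \<noteq> 0))"
proof -
  interpret F: fold_ctx L S d using assms by unfold_locales
  let ?n = "card S"
  have finS: "finite S" using assms(2) unfolding is_shape_def by simp
  define f where "f k = F.r (int k *s d)" for k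
  have fS: "f k \<in> S" for k unfolding f_def using F.r_in .
  have rng: "range (folded_row L S d) = range f" unfolding f_def using F.fr by auto
  have rhs: "?thesis \<longleftrightarrow> (S \<subseteq> range f \<longleftrightarrow> (int ?n *s d \<in> L \<and>
        (\<forall>i::nat. 0 < i \<and> i < ?n \<longrightarrow> int i *s d \<notin> L)))"
  proof -
    have "(\<forall>i::int. 0 < i \<and> i < int ?n \<longrightarrow> (i *s d) - center L S (i *s d) \<noteq> 0) \<longleftrightarrow>
          (\<forall>i::nat. 0 < i \<and> i < ?n \<longrightarrow> int i *s d \<notin> L)"
    proof
      assume h: "\<forall>i::int. 0 < i \<and> i < int ?n \<longrightarrow> (i *s d) - center L S (i *s d) \<noteq> 0"
      show "\<forall>i::nat. 0 < i \<and> i < ?n \<longrightarrow> int i *s d \<notin> L"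
        using h F.r_zero unfolding F.r_def by (metis of_nat_0_less_iff of_nat_less_iff)
    next
      assume h: "\<forall>i::nat. 0 < i \<and> i < ?n \<longrightarrow> int i *s d \<notin> L"
      show "\<forall>i::int. 0 < i \<and> i < int ?n \<longrightarrow> (i *s d) - center L S (i *s d) \<noteq> 0"
      proof (intro allI impI)
        fix i :: int assume i: "0 < i \<and> i < int ?n"
        then obtain k where k: "i = int k" by (metis zero_le_imp_eq_int less_le)
        thus "(i *s d) - center L S (i *s d) \<noteq> 0" using h i F.r_zero unfolding F.r_def by simp
      qed
    qed
    thus ?thesis unfolding defines_folding_def rng using F.r_zero unfolding F.r_def by simp
  qed
  \<comment> \<open>pigeonhole: some positive multiple at most n lies in L\<close>
  have ex: "\<exists>m. 0 < m \<and> m \<le> ?n \<and> int m *s d \<in> L"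
  proof -
    have "\<not> inj_on f {0..?n}"
    proof
      assume "inj_on f {0..?n}"
      hence "card (f ` {0..?n}) = Suc ?n" by (simp add: card_image)
      moreover have "card (f ` {0..?n}) \<le> ?n" using fS finS by (intro card_mono) auto
      ultimately show False by simp
    qed
    then obtain i j where ij: "i \<in> {0..?n}" "j \<in> {0..?n}" "i \<noteq> j" "f i = f j"
      unfolding inj_on_def by blast
    show ?thesis
    proof (cases "i < j")
      case True
      have "F.r (int j *s d) = F.r (int i *s d)" using ij f_def by simp
      hence "(int j - int i) *s d \<in> L" using F.diff_mult by blast
      hence "int (j - i) *s d \<in> L" using True by (simp add: of_nat_diff)
      thus ?thesis using True ij by (intro exI[of _ "j - i"]) auto
    next
      case False
      hence ji: "j < i" using ij by simp
      have "F.r (int i *s d) = F.r (int j *s d)" using ij f_def by simp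
      hence "(int i - int j) *s d \<in> L" using F.diff_mult by blast
      hence "int (i - j) *s d \<in> L" using ji by (simp add: of_nat_diff)
      thus ?thesis using ji ij by (intro exI[of _ "i - j"]) auto
    qed
  qed
  define m where "m = (LEAST m. 0 < m \<and> int m *s d \<in> L)"
  have m01: "0 < m \<and> int m *s d \<in> L"
    unfolding m_def by (rule LeastI_ex) (use ex in blast)
  obtain m0 where m0: "0 < m0" "m0 \<le> ?n" "int m0 *s d \<in> L" using ex by blast
  have "m \<le> m0" unfolding m_def by (rule Least_le) (use m0 in blast)
  hence m: "0 < m" "int m *s d \<in> L" "m \<le> ?n" using m01 m0 by auto
  have mmin: "\<And>k. 0 < k \<Longrightarrow> k < m \<Longrightarrow> int k *s d \<notin> L"
    unfolding m_def using not_less_Least by blast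
  have per: "range f \<subseteq> f ` {0..<m}"
  proof -
    have "f k \<in> f ` {0..<m}" for k
    proof (induction k rule: less_induct)
      case (less k)
      show ?case
      proof (cases "k < m")
        case True thus ?thesis by auto
      next
        case False
        have "(int k - int (k - m)) *s d = int m *s d" using False by (simp add: of_nat_diff)
        hence "f k = f (k - m)" unfolding f_def using F.diff_mult m(2) by simp
        thus ?thesis using less[of "k - m"] m(1) False by simp
      qed
    qed
    thus ?thesis by blast
  qed
  show ?thesis unfolding rhs
  proof
    assume "S \<subseteq> range f"
    hence "S \<subseteq> f ` {0..<m}" using per by blast
    hence "?n \<le> card (f ` {0..<m})" by (intro card_mono) auto
    also have "\<dots> \<le> m" using card_image_le[of "{0..<m}" f] by simp
    finally have "m = ?n" using m(3) by simp
    thus "int ?n *s d \<in> L \<and> (\<forall>i::nat. 0 < i \<and> i < ?n \<longrightarrow> int i *s d \<notin> L)"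
      using m mmin by auto
  next
    assume h: "int ?n *s d \<in> L \<and> (\<forall>i::nat. 0 < i \<and> i < ?n \<longrightarrow> int i *s d \<notin> L)"
    have inj: "inj_on f {0..<?n}"
    proof (rule inj_onI)
      fix i j assume ij: "i \<in> {0..<?n}" "j \<in> {0..<?n}" "f i = f j"
      show "i = j"
      proof (rule ccontr)
        assume "i \<noteq> j"
        show False
        proof (cases "i < j")
          case True
          have "F.r (int j *s d) = F.r (int i *s d)" using ij f_def by simp
          hence "(int j - int i) *s d \<in> L" using F.diff_mult by blast
          hence X: "int (j - i) *s d \<in> L" using True by (simp add: of_nat_diff)
          have "0 < j - i" "j - i < card S" using True ij by auto
          thus False using h X by blast
        next
          case False
          hence ji: "j < i" using \<open>i \<noteq> j\<close> by simp
          have "F.r (int i *s d) = F.r (int j *s d)" using ij f_def by simp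
          hence "(int i - int j) *s d \<in> L" using F.diff_mult by blast
          hence X: "int (i - j) *s d \<in> L" using ji by (simp add: of_nat_diff)
          have "0 < i - j" "i - j < card S" using ji ij by auto
          thus False using h X by blast
        qed
      qed
    qed
    have "f ` {0..<?n} \<subseteq> S" using fS by auto
    moreover have "card (f ` {0..<?n}) = card S" using inj by (simp add: card_image)
    ultimately have "f ` {0..<?n} = S" using finS by (intro card_subset_eq) auto
    thus "S \<subseteq> range f" by blast
  qed
qed

end
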